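(* Let $1< s_0<s_1$ and let $u$ be a sufficiently regular function on $\mathcal{K}_{[s_0,s_1]}$ which vanishes near the conical boundary. Then $$E_{\mathrm{con}}(s_1,u)^{1/2}\leq E_{\mathrm{con}}(s_0,u)^{1/2} + \int_{s_0}^{s_1} s\,\|\Box u\|_{L^2(\mathcal{H}_s)}\,ds .$$
   Context: Coordinates $(t,x)\in\mathbb{R}^{2+1}$, $x=(x^1,x^2)$, $r=|x|$, $\Box=\partial_t^2-\partial_1^2-\partial_2^2$, $s=\sqrt{t^2-r^2}$. $\mathcal{K}=\{t>r+1\}$, $\mathcal{H}_s=\{t=\sqrt{s^2+r^2}\}$, $\mathcal{K}_{[s_0,s_1]}=\{(t,x)\in\mathcal{K}: s_0^2\le t^2-r^2\le s_1^2\}$. "Vanishes near the conical boundary" means $u$ vanishes in a neighbourhood of $\{t=r+1\}$ (so $u$ extends by zero outside $\mathcal{K}$). For $f$ defined near $\mathcal{H}_s$, $\int_{\mathcal{H}_s}f\,dx:=\int_{\mathbb{R}^2}f(\sqrt{s^2+|x|^2},x)\,dx$ and $\|f\|_{L^2(\mathcal{H}_s)}$ is the $L^2(\mathbb{R}^2)$ norm of $x\mapsto f(\sqrt{s^2+|x|^2},x)$. Hyperbolic frame: $\bar\partial_s=(s/t)\partial_t$, $\bar\partial_a=(x^a/t)\partial_t+\partial_a$ ($a=1,2$). $K:=s\bar\partial_s+2x^a\bar\partial_a$ (sum over $a$). Conformal energy: $E_{\mathrm{con}}(s,u):=\int_{\mathcal{H}_s}\big((Ku+u)^2+\sum_{a}|s\bar\partial_a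 u|^2\big)dx$. *)

theory Defs
  imports "HOL-Analysis.Analysis"
begin

text \<open>Points of R^(2+1) are triples (t, x1, x2).\<close>
type_synonym pt = "real \<times> real \<times> real"

definition e_t :: pt where "e_t = (1, 0, 0)"
definition e_1 :: pt where "e_1 = (0, 1, 0)"
definition e_2 :: pt where "e_2 = (0, 0, 1)"

definition pd :: "(pt \<Rightarrow> real) \<Rightarrow> pt \<Rightarrow> pt \<Rightarrow> real" where
  "pd u v p = frechet_derivative u (at p) v"

definition C2_on :: "pt set \<Rightarrow> (pt \<Rightarrow> real) \<Rightarrow> bool" where
  "C2_on U u \<longleftrightarrow> open U \<and> (\<forall>p\<in>U. u differentiable (at p))
     \<and> (\<forall>v. \<forall>p\<in>U. (\<lambda>q. pd u v q) differentiable (at p))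
     \<and> (\<forall>v w. continuous_on U (\<lambda>q. pd (\<lambda>q'. pd u v q') w q))"

definition tco :: "pt \<Rightarrow> real" where "tco p = fst p"
definition x1co :: "pt \<Rightarrow> real" where "x1co p = fst (snd p)"
definition x2co :: "pt \<Rightarrow> real" where "x2co p = snd (snd p)"
definition rad :: "pt \<Rightarrow> real" where "rad p = sqrt ((x1co p)^2 + (x2co p)^2)"
definition hs :: "pt \<Rightarrow> real" where "hs p = sqrt ((tco p)^2 - (rad p)^2)"

definition wave :: "(pt \<Rightarrow> real) \<Rightarrow> pt \<Rightarrow> real" where
  "wave u p = pd (\<lambda>q. pd u e_t q) e_t p - pd (\<lambda>q. pd u e_1 q) e_1 p
              - pd (\<lambda>q. pd u e_2 q) e_2 p"

definition bar_s :: "(pt \<Rightarrow> real) \<Rightarrow> pt \<Rightarrow> real" where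
  "bar_s u p = (hs p / tco p) * pd u e_t p"
definition bar_1 :: "(pt \<Rightarrow> real) \<Rightarrow> pt \<Rightarrow> real" where
  "bar_1 u p = (x1co p / tco p) * pd u e_t p + pd u e_1 p"
definition bar_2 :: "(pt \<Rightarrow> real) \<Rightarrow> pt \<Rightarrow> real" where
  "bar_2 u p = (x2co p / tco p) * pd u e_t p + pd u e_2 p"

definition Kop :: "(pt \<Rightarrow> real) \<Rightarrow> pt \<Rightarrow> real" where
  "Kop u p = hs p * bar_s u p + 2 * (x1co p * bar_1 u p + x2co p * bar_2 u p)"

text \<open>Point of the hyperboloid H_s above x = (y1, y2).\<close>
definition hyp :: "real \<Rightarrow> real \<times> real \<Rightarrow> pt" where
  "hyp s y = (sqrt (s^2 + (fst y)^2 + (snd y)^2), fst y, snd y)"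

definition E_con :: "real \<Rightarrow> (pt \<Rightarrow> real) \<Rightarrow> real" where
  "E_con s u = integral UNIV (\<lambda>y::real \<times> real.
       (Kop u (hyp s y) + u (hyp s y))^2
     + (s * bar_1 u (hyp s y))^2 + (s * bar_2 u (hyp s y))^2)"

definition L2_hyp :: "real \<Rightarrow> (pt \<Rightarrow> real) \<Rightarrow> real" where
  "L2_hyp s f = sqrt (integral UNIV (\<lambda>y::real \<times> real. (f (hyp s y))^2))"

text \<open>Hyperbolic slab {t > 0, s0^2 <= t^2 - r^2 <= s1^2}; intersected with
  {t > r + 1} it is K_[s0,s1].\<close>
definition slab :: "real \<Rightarrow> real \<Rightarrow> pt set" where
  "slab s0 s1 = {p. tco p > 0 \<and> s0^2 \<le> (tco p)^2 - (rad p)^2 \<and> (tco p)^2 - (rad p)^2 \<le> s1^2}"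

end

theory Submission
  imports Defs
begin


definition Tf :: "real \<Rightarrow> real \<times> real \<Rightarrow> real" where
  "Tf s y = sqrt (s^2 + (fst y)^2 + (snd y)^2)"

lemma hyp_eq: "hyp s y = (Tf s y, fst y, snd y)"
  by (simp add: hyp_def Tf_def)

lemma Tf_sq: "(Tf s y)^2 = s^2 + (fst y)^2 + (snd y)^2"
  by (simp add: Tf_def)

lemma Tf_pos: "s \<noteq> 0 \<Longrightarrow> Tf s y > 0"
  by (simp add: Tf_def add_pos_nonneg)

lemma hyp_co: "tco (hyp s y) = Tf s y" "x1co (hyp s y) = fst y" "x2co (hyp s y) = snd y"
  by (simp_all add: hyp_eq tco_def x1co_def x2co_def)

lemma rad_hyp: "rad (hyp s y) = sqrt ((fst y)^2 + (snd y)^2)"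
  by (simp add: rad_def hyp_co)

lemma hs_hyp: "s \<ge> 0 \<Longrightarrow> hs (hyp s y) = s"
  by (simp add: hs_def hyp_co rad_hyp Tf_sq)

lemma hyp_slab: "0 < s0 \<Longrightarrow> s0 \<le> s \<Longrightarrow> s \<le> s1 \<Longrightarrow> hyp s y \<in> slab s0 s1"
  unfolding slab_def using Tf_pos[of s y]
  by (simp add: hyp_co rad_hyp Tf_sq power_mono)

lemma pd_works: "f differentiable (at p) \<Longrightarrow> (f has_derivative (\<lambda>v. pd f v p)) (at p)"
  unfolding pd_def using frechet_derivative_works by (metis eta_contract_eq)

lemma pd_bl: "f differentiable (at p) \<Longrightarrow> bounded_linear (\<lambda>v. pd f v p)"
  using pd_works has_derivative_bounded_linear by blast

lemma pd_scale: "f differentiable (at p) \<Longrightarrow> pd f (c *\<^sub>R v) p = c * pd f v p"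
  using linear_scale[OF bounded_linear.linear[OF pd_bl]] by fastforce

lemma pd_add: "f differentiable (at p) \<Longrightarrow> pd f (v + w) p = pd f v p + pd f w p"
  using linear_add[OF bounded_linear.linear[OF pd_bl]] by fastforce

lemma pd_comp: "f differentiable (at p) \<Longrightarrow> pd f (a, b, c) p = a * pd f e_t p + b * pd f e_1 p + c * pd f e_2 p"
proof -
  assume d: "f differentiable (at p)"
  have "(a, b, c) = a *\<^sub>R e_t + b *\<^sub>R e_1 + c *\<^sub>R e_2"
    by (simp add: e_t_def e_1_def e_2_def)
  then show ?thesis using d by (simp add: pd_add pd_scale)
qed

lemma pd_chain:
  assumes "(g has_derivative (\<lambda>h. h *\<^sub>R w)) (at x within X)" "f differentiable (at (g x))"
  shows "((\<lambda>x. f (g x)) has_real_derivative pd f w (g x)) (at x within X)"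
proof -
  have "((\<lambda>x. f (g x)) has_derivative (\<lambda>h. pd f (h *\<^sub>R w) (g x))) (at x within X)"
    using has_derivative_compose[OF assms(1) pd_works[OF assms(2)]] .
  moreover have "(\<lambda>h. pd f (h *\<^sub>R w) (g x)) = (\<lambda>h. pd f w (g x) * h)"
    using pd_scale[OF assms(2)] by (auto simp: mult.commute)
  ultimately show ?thesis by (simp add: has_field_derivative_def)
qed

lemma sqrt_deriv:
  assumes "c + x^2 > 0"
  shows "((\<lambda>x. sqrt (c + x^2)) has_real_derivative x / sqrt (c + x^2)) (at x within X)"
  using assms
  by (auto intro!: derivative_eq_intros simp: field_simps)

lemma hyp_deriv_s:
  assumes "s > 0"
  shows "((\<lambda>\<sigma>. hyp \<sigma> y) has_derivative (\<lambda>h. h *\<^sub>R (s / Tf s y, 0, 0))) (at s within X)"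
proof -
  have *: "((\<lambda>\<sigma>. sqrt (((fst y)^2 + (snd y)^2) + \<sigma>^2)) has_real_derivative s / Tf s y) (at s within X)"
    using sqrt_deriv[of "(fst y)^2 + (snd y)^2" s X] assms
    by (simp add: Tf_def add_ac add_pos_nonneg)
  have e: "(\<lambda>\<sigma>. hyp \<sigma> y) = (\<lambda>\<sigma>. (sqrt (((fst y)^2 + (snd y)^2) + \<sigma>^2), fst y, snd y))"
    by (auto simp: hyp_def add_ac)
  show ?thesis unfolding e
    apply (rule has_derivative_eq_rhs)
     apply (rule has_derivative_Pair[OF *[unfolded has_field_derivative_def]])
     apply (rule has_derivative_Pair; rule has_derivative_const)
    by (auto simp: mult.commute)
qed

lemma hyp_deriv_1:
  assumes "s > 0"
  shows "((\<lambda>a. hyp s (a, b)) has_derivative (\<lambda>h. h *\<^sub>R (a / Tf s (a, b), 1, 0))) (at a within X)"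
proof -
  have *: "((\<lambda>a. sqrt ((s^2 + b^2) + a^2)) has_real_derivative a / Tf s (a, b)) (at a within X)"
  proof -
    have p: "(s^2 + b^2) + a^2 > 0" using assms by (simp add: add_pos_nonneg)
    have "Tf s (a, b) = sqrt ((s^2 + b^2) + a^2)" by (simp add: Tf_def add_ac)
    then show ?thesis using sqrt_deriv[OF p, of X] by simp
  qed
  have e: "(\<lambda>a. hyp s (a, b)) = (\<lambda>a. (sqrt ((s^2 + b^2) + a^2), a, b))"
    by (auto simp: hyp_def add_ac)
  show ?thesis unfolding e
    apply (rule has_derivative_eq_rhs)
     apply (rule has_derivative_Pair[OF *[unfolded has_field_derivative_def]])
     apply (rule has_derivative_Pair; (rule has_derivative_ident | rule has_derivative_const))
    by (auto simp: mult.commute)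
qed

lemma hyp_deriv_2:
  assumes "s > 0"
  shows "((\<lambda>b. hyp s (a, b)) has_derivative (\<lambda>h. h *\<^sub>R (b / Tf s (a, b), 0, 1))) (at b within X)"
proof -
  have *: "((\<lambda>b. sqrt ((s^2 + a^2) + b^2)) has_real_derivative b / Tf s (a, b)) (at b within X)"
  proof -
    have p: "(s^2 + a^2) + b^2 > 0" using assms by (simp add: add_pos_nonneg)
    have "Tf s (a, b) = sqrt ((s^2 + a^2) + b^2)" by (simp add: Tf_def add_ac)
    then show ?thesis using sqrt_deriv[OF p, of X] by simp
  qed
  have e: "(\<lambda>b. hyp s (a, b)) = (\<lambda>b. (sqrt ((s^2 + a^2) + b^2), a, b))"
    by (auto simp: hyp_def add_ac)
  show ?thesis unfolding e
    apply (rule has_derivative_eq_rhs)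
     apply (rule has_derivative_Pair[OF *[unfolded has_field_derivative_def]])
     apply (rule has_derivative_Pair; (rule has_derivative_ident | rule has_derivative_const))
    by (auto simp: mult.commute)
qed

lemma chain_s:
  assumes "s > 0" "f differentiable (at (hyp s y))"
  shows "((\<lambda>\<sigma>. f (hyp \<sigma> y)) has_real_derivative (s / Tf s y) * pd f e_t (hyp s y)) (at s within X)"
  using pd_chain[OF hyp_deriv_s[OF assms(1)] assms(2)] pd_comp[OF assms(2)] by simp

lemma chain_1:
  assumes "s > 0" "f differentiable (at (hyp s (a, b)))"
  shows "((\<lambda>a. f (hyp s (a, b))) has_real_derivative (a / Tf s (a, b)) * pd f e_t (hyp s (a, b)) + pd f e_1 (hyp s (a, b))) (at a within X)"
  using pd_chain[OF hyp_deriv_1[OF assms(1)] assms(2)] pd_comp[OF assms(2)] by simp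

lemma chain_2:
  assumes "s > 0" "f differentiable (at (hyp s (a, b)))"
  shows "((\<lambda>b. f (hyp s (a, b))) has_real_derivative (b / Tf s (a, b)) * pd f e_t (hyp s (a, b)) + pd f e_2 (hyp s (a, b))) (at b within X)"
  using pd_chain[OF hyp_deriv_2[OF assms(1)] assms(2)] pd_comp[OF assms(2)] by simp


lemma line_deriv:
  assumes "f differentiable (at (q + a *\<^sub>R v))"
  shows "((\<lambda>a. f (q + a *\<^sub>R v)) has_real_derivative pd f v (q + a *\<^sub>R v)) (at a within X)"
proof -
  have "((\<lambda>a. q + a *\<^sub>R v) has_derivative (\<lambda>h. h *\<^sub>R v)) (at a within X)"
    by (auto intro!: derivative_eq_intros)
  from pd_chain[OF this] assms show ?thesis by simp
qed

lemma mixed_mvt: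
  fixes f :: "pt \<Rightarrow> real"
  assumes h: "h > 0"
    and inU: "\<And>a b. 0 \<le> a \<Longrightarrow> a \<le> h \<Longrightarrow> 0 \<le> b \<Longrightarrow> b \<le> h \<Longrightarrow> p + a *\<^sub>R v + b *\<^sub>R w \<in> U"
    and d0: "\<And>q. q \<in> U \<Longrightarrow> f differentiable (at q)"
    and dv: "\<And>q. q \<in> U \<Longrightarrow> (\<lambda>q. pd f v q) differentiable (at q)"
  shows "\<exists>a b. 0 \<le> a \<and> a \<le> h \<and> 0 \<le> b \<and> b \<le> h \<and>
     f (p + h *\<^sub>R v + h *\<^sub>R w) - f (p + h *\<^sub>R v) - f (p + h *\<^sub>R w) + f p
       = h * (h * pd (\<lambda>q. pd f v q) w (p + a *\<^sub>R v + b *\<^sub>R w))"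
proof -
  define G where "G a = f ((p + h *\<^sub>R w) + a *\<^sub>R v) - f (p + a *\<^sub>R v)" for a
  have G': "(G has_real_derivative (pd f v ((p + h *\<^sub>R w) + a *\<^sub>R v) - pd f v (p + a *\<^sub>R v))) (at a)"
    if "0 \<le> a" "a \<le> h" for a
  proof -
    have i1: "(p + h *\<^sub>R w) + a *\<^sub>R v \<in> U" using inU[of a h] that h by (simp add: add_ac)
    have i2: "p + a *\<^sub>R v \<in> U" using inU[of a 0] that h by simp
    show ?thesis unfolding G_def
      by (intro DERIV_diff line_deriv d0 i1 i2)
  qed
  obtain a where a: "0 < a" "a < h" and Ga: "G h - G 0 = (h - 0) * (pd f v ((p + h *\<^sub>R w) + a *\<^sub>R v) - pd f v (p + a *\<^sub>R v))"
    using MVT2[OF h, of G "\<lambda>a. pd f v ((p + h *\<^sub>R w) + a *\<^sub>R v) - pd f v (p + a *\<^sub>R v)"] G' by auto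
  define H where "H b = pd f v ((p + a *\<^sub>R v) + b *\<^sub>R w)" for b
  have H': "(H has_real_derivative pd (\<lambda>q. pd f v q) w ((p + a *\<^sub>R v) + b *\<^sub>R w)) (at b)"
    if "0 \<le> b" "b \<le> h" for b
  proof -
    have i1: "(p + a *\<^sub>R v) + b *\<^sub>R w \<in> U" using inU[of a b] that a by simp
    show ?thesis unfolding H_def
      by (intro line_deriv dv i1)
  qed
  obtain b where b: "0 < b" "b < h" and Hb: "H h - H 0 = (h - 0) * pd (\<lambda>q. pd f v q) w ((p + a *\<^sub>R v) + b *\<^sub>R w)"
    using MVT2[OF h, of H "\<lambda>b. pd (\<lambda>q. pd f v q) w ((p + a *\<^sub>R v) + b *\<^sub>R w)"] H' by auto
  have "f (p + h *\<^sub>R v + h *\<^sub>R w) - f (p + h *\<^sub>R v) - f (p + h *\<^sub>R w) + f p = G h - G 0"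
    by (simp add: G_def add_ac)
  also have "\<dots> = h * (H h - H 0)" using Ga by (simp add: H_def add_ac)
  also have "\<dots> = h * (h * pd (\<lambda>q. pd f v q) w (p + a *\<^sub>R v + b *\<^sub>R w))" using Hb by simp
  finally show ?thesis using a b by (intro exI[of _ a] exI[of _ b]) auto
qed

lemma schwarz:
  fixes f :: "pt \<Rightarrow> real"
  assumes U: "open U" "p \<in> U"
    and d0: "\<And>q. q \<in> U \<Longrightarrow> f differentiable (at q)"
    and dv: "\<And>q. q \<in> U \<Longrightarrow> (\<lambda>q. pd f v q) differentiable (at q)"
    and dw: "\<And>q. q \<in> U \<Longrightarrow> (\<lambda>q. pd f w q) differentiable (at q)"
    and cvw: "continuous_on U (\<lambda>q. pd (\<lambda>q'. pd f v q') w q)"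
    and cwv: "continuous_on U (\<lambda>q. pd (\<lambda>q'. pd f w q') v q)"
  shows "pd (\<lambda>q. pd f v q) w p = pd (\<lambda>q. pd f w q) v p"
proof (rule ccontr)
  let ?A = "pd (\<lambda>q. pd f v q) w p" and ?B = "pd (\<lambda>q. pd f w q) v p"
  assume ne: "?A \<noteq> ?B"
  define e where "e = \<bar>?A - ?B\<bar> / 2"
  have e: "e > 0" using ne by (simp add: e_def)
  have c1: "isCont (\<lambda>q. pd (\<lambda>q'. pd f v q') w q) p" using cvw U continuous_on_eq_continuous_at by blast
  have c2: "isCont (\<lambda>q. pd (\<lambda>q'. pd f w q') v q) p" using cwv U continuous_on_eq_continuous_at by blast
  obtain r1 where r1: "r1 > 0" "\<And>q. dist q p < r1 \<Longrightarrow> dist (pd (\<lambda>q'. pd f v q') w q) ?A < e"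
    using c1[unfolded continuous_at_eps_delta] e by blast
  obtain r2 where r2: "r2 > 0" "\<And>q. dist q p < r2 \<Longrightarrow> dist (pd (\<lambda>q'. pd f w q') v q) ?B < e"
    using c2[unfolded continuous_at_eps_delta] e by blast
  obtain r3 where r3: "r3 > 0" "ball p r3 \<subseteq> U" using U open_contains_ball by blast
  define r where "r = min r1 (min r2 r3)"
  have r: "r > 0" using r1 r2 r3 by (simp add: r_def)
  define h where "h = r / (2 * (norm v + norm w + 1))"
  have "0 < 2 * (norm v + norm w + 1)" by (smt (verit) norm_ge_zero)
  then have h: "h > 0" using r unfolding h_def by (intro divide_pos_pos)
  have close: "dist (p + a *\<^sub>R v + b *\<^sub>R w) p < r" if "0 \<le> a" "a \<le> h" "0 \<le> b" "b \<le> h" for a b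
  proof -
    have "dist (p + a *\<^sub>R v + b *\<^sub>R w) p = norm (a *\<^sub>R v + b *\<^sub>R w)"
      by (simp add: dist_norm)
    also have "\<dots> \<le> a * norm v + b * norm w"
      using norm_triangle_ineq[of "a *\<^sub>R v" "b *\<^sub>R w"] that by simp
    also have "\<dots> \<le> h * norm v + h * norm w"
      using that by (intro add_mono mult_right_mono) auto
    also have "\<dots> < r"
    proof -
      have "h * norm v + h * norm w = r * ((norm v + norm w) / (2 * (norm v + norm w + 1)))"
        by (simp add: h_def add_divide_distrib[symmetric] distrib_left)
      also have "\<dots> < r * 1"
        using r \<open>0 < 2 * (norm v + norm w + 1)\<close>
        by (intro mult_strict_left_mono) (auto simp: divide_less_eq)
      finally show ?thesis by simp
    qed
    finally show ?thesis .
  qed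
  have inU: "p + a *\<^sub>R v + b *\<^sub>R w \<in> U" if "0 \<le> a" "a \<le> h" "0 \<le> b" "b \<le> h" for a b
    using close[OF that] r3(2) by (auto simp: r_def dist_commute)
  have inU': "p + a *\<^sub>R w + b *\<^sub>R v \<in> U" if "0 \<le> a" "a \<le> h" "0 \<le> b" "b \<le> h" for a b
    using inU[of b a] that by (simp add: add_ac)
  obtain a b where ab: "0 \<le> a" "a \<le> h" "0 \<le> b" "b \<le> h" and
    D1: "f (p + h *\<^sub>R v + h *\<^sub>R w) - f (p + h *\<^sub>R v) - f (p + h *\<^sub>R w) + f p
       = h * (h * pd (\<lambda>q. pd f v q) w (p + a *\<^sub>R v + b *\<^sub>R w))"
    using mixed_mvt[OF h inU d0 dv] by blast
  obtain a' b' where ab': "0 \<le> a'" "a' \<le> h" "0 \<le> b'" "b' \<le> h" and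
    D2: "f (p + h *\<^sub>R w + h *\<^sub>R v) - f (p + h *\<^sub>R w) - f (p + h *\<^sub>R v) + f p
       = h * (h * pd (\<lambda>q. pd f w q) v (p + a' *\<^sub>R w + b' *\<^sub>R v))"
    using mixed_mvt[OF h inU' d0 dw] by blast
  have eq: "pd (\<lambda>q. pd f v q) w (p + a *\<^sub>R v + b *\<^sub>R w) = pd (\<lambda>q. pd f w q) v (p + a' *\<^sub>R w + b' *\<^sub>R v)"
  proof -
    have "h * (h * pd (\<lambda>q. pd f v q) w (p + a *\<^sub>R v + b *\<^sub>R w)) = h * (h * pd (\<lambda>q. pd f w q) v (p + a' *\<^sub>R w + b' *\<^sub>R v))"
      using D1 D2 by (simp add: algebra_simps)
    then show ?thesis using h by simp
  qed
  have q1: "dist (pd (\<lambda>q'. pd f v q') w (p + a *\<^sub>R v + b *\<^sub>R w)) ?A < e"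
    using r1(2) close[OF ab] by (simp add: r_def)
  have q2: "dist (pd (\<lambda>q'. pd f w q') v (p + a' *\<^sub>R w + b' *\<^sub>R v)) ?B < e"
    using r2(2) close[of b' a'] ab' by (simp add: r_def add_ac)
  have "\<bar>?A - ?B\<bar> < 2 * e" using q1 q2 eq by (simp add: dist_real_def)
  then show False by (simp add: e_def)
qed


lemma amgm_bound:
  fixes A B X :: real
  assumes A: "A \<ge> 0" and B: "B \<ge> 0" and H: "\<And>c. c > 0 \<Longrightarrow> X \<le> c * A + B / c"
  shows "X \<le> 2 * sqrt A * sqrt B"
proof (cases "A > 0 \<and> B > 0")
  case True
  define c where "c = sqrt B / sqrt A"
  have c: "c > 0" using True by (simp add: c_def)
  have "c * A = sqrt A * sqrt B"
    using True by (simp add: c_def field_simps)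
  moreover have "B / c = sqrt A * sqrt B"
    using True by (simp add: c_def field_simps)
  ultimately show ?thesis using H[OF c] by simp
next
  case False
  then have Z: "A = 0 \<or> B = 0" using A B by auto
  show ?thesis
  proof (rule ccontr)
    assume "\<not> ?thesis"
    then have X: "X > 0" using Z by auto
    show False
    proof (cases "A = 0")
      case True
      define c where "c = 2 * (B + 1) / X"
      have c: "c > 0" using X B by (simp add: c_def)
      have "B / c = B * X / (2 * (B + 1))" by (simp add: c_def)
      also have "\<dots> < X"
  proof -
    have d: "2 * (B + 1) > 0" using B by simp
    have "X * (2 * (B + 1)) = 2 * (B * X) + 2 * X" by (simp add: algebra_simps)
    moreover have "B * X \<ge> 0" using X B by simp
    ultimately have "B * X < X * (2 * (B + 1))" using X by linarith
    then show ?thesis using d by (simp add: divide_less_eq)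
  qed
      finally show False using H[OF c] True by simp
    next
      case False
      then have B0: "B = 0" using Z by simp
      define c where "c = X / (2 * (A + 1))"
      have c: "c > 0" using X A by (simp add: c_def)
      have "c * A = X * A / (2 * (A + 1))" by (simp add: c_def)
      also have "\<dots> < X"
  proof -
    have d: "2 * (A + 1) > 0" using A by simp
    have "X * (2 * (A + 1)) = 2 * (X * A) + 2 * X" by (simp add: algebra_simps)
    moreover have "X * A \<ge> 0" using X A by simp
    ultimately have "X * A < X * (2 * (A + 1))" using X by linarith
    then show ?thesis using d by (simp add: divide_less_eq)
  qed
      finally show False using H[OF c] B0 by simp
    qed
  qed
qed

lemma ode_sqrt:
  fixes E E' g :: "real \<Rightarrow> real"
  assumes ab: "a < b"
    and dE: "\<And>s. s \<in> {a..b} \<Longrightarrow> (E has_real_derivative E' s) (at s within {a..b})"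
    and bd: "\<And>s. s \<in> {a..b} \<Longrightarrow> E' s \<le> 2 * sqrt (E s) * g s"
    and En: "\<And>s. s \<in> {a..b} \<Longrightarrow> E s \<ge> 0"
    and gn: "\<And>s. s \<in> {a..b} \<Longrightarrow> g s \<ge> 0"
    and gc: "continuous_on {a..b} g"
  shows "sqrt (E b) \<le> sqrt (E a) + integral {a..b} g"
proof (rule field_le_epsilon)
  fix t :: real assume t: "t > 0"
  define ep where "ep = t^2"
  have ep: "ep > 0" using t by (simp add: ep_def)
  define phi where "phi s = sqrt (E s + ep) - integral {a..s} g" for s
  define phi' where "phi' s = E' s / (2 * sqrt (E s + ep)) - g s" for s
  have dphi: "(phi has_real_derivative phi' s) (at s within {a..b})" if s: "s \<in> {a..b}" for s
  proof -
    have G: "((\<lambda>s. integral {a..s} g) has_real_derivative g s) (at s within {a..b})"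
      unfolding has_real_derivative_iff_has_vector_derivative
      by (rule integral_has_vector_derivative[OF gc s])
    have pos: "E s + ep > 0" using En[OF s] ep by simp
    have S: "((\<lambda>s. sqrt (E s + ep)) has_real_derivative (inverse (sqrt (E s + ep)) / 2) * E' s) (at s within {a..b})"
    proof -
      have e: "((\<lambda>s. E s + ep) has_real_derivative E' s) (at s within {a..b})"
        using DERIV_add[OF dE[OF s] DERIV_const[of ep]] by simp
      show ?thesis
        by (rule DERIV_chain2[of sqrt "inverse (sqrt (E s + ep)) / 2" "\<lambda>s. E s + ep" s "E' s" "{a..b}", OF DERIV_real_sqrt[OF pos] e])
    qed
    have eq: "phi' s = (inverse (sqrt (E s + ep)) / 2) * E' s - g s"
      unfolding phi'_def by (simp add: inverse_eq_divide)
    have ph: "phi = (\<lambda>s. sqrt (E s + ep) - integral {a..s} g)"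
      by (rule ext) (simp add: phi_def)
    show ?thesis unfolding ph eq by (rule DERIV_diff[OF S G])
  qed
  have nonpos: "phi' s \<le> 0" if s: "s \<in> {a..b}" for s
  proof -
    have pos: "E s + ep > 0" using En[OF s] ep by simp
    have "E' s / (2 * sqrt (E s + ep)) \<le> 2 * sqrt (E s) * g s / (2 * sqrt (E s + ep))"
      using bd[OF s] pos by (intro divide_right_mono) simp_all
    also have "\<dots> = g s * (sqrt (E s) / sqrt (E s + ep))" by simp
    also have "\<dots> \<le> g s * 1"
    proof (rule mult_left_mono[OF _ gn[OF s]])
      have "sqrt (E s) \<le> sqrt (E s + ep)" using ep by simp
      then show "sqrt (E s) / sqrt (E s + ep) \<le> 1" using pos by simp
    qed
    finally show ?thesis by (simp add: phi'_def)
  qed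
  obtain x where x: "x \<in> {a..b}" and mv: "phi b - phi a = phi' x * (b - a)"
  proof -
    have "\<And>x. a \<le> x \<Longrightarrow> x \<le> b \<Longrightarrow> (phi has_derivative (\<lambda>h. phi' x * h)) (at x within {a..b})"
      using dphi by (simp add: has_field_derivative_def)
    from mvt_very_simple[of a b phi "\<lambda>s h. phi' s * h", OF _ this] ab
    show ?thesis using that by (auto simp: mult.commute)
  qed
  have "phi b \<le> phi a" using mv nonpos[OF x] ab mult_nonpos_nonneg[of "phi' x" "b - a"] by simp
  then have "sqrt (E b + ep) \<le> sqrt (E a + ep) + integral {a..b} g"
    by (simp add: phi_def)
  moreover have "sqrt (E b) \<le> sqrt (E b + ep)" using ep by simp
  moreover have "sqrt (E a + ep) \<le> sqrt (E a) + t"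
  proof -
    have "E a \<ge> 0" using En[of a] ab by simp
    then have "sqrt (E a + ep) \<le> sqrt (E a) + sqrt ep" using sqrt_add_le_add_sqrt[of "E a" ep] ep by simp
    moreover have "sqrt ep = t" using t by (simp add: ep_def)
    ultimately show ?thesis by simp
  qed
  ultimately show "sqrt (E b) \<le> sqrt (E a) + integral {a..b} g + t" by linarith
qed


lemma pd_zero_open:
  assumes "open Ob" "\<And>q. q \<in> Ob \<Longrightarrow> f q = 0" "p \<in> Ob"
  shows "pd f v p = 0"
proof -
  have "((\<lambda>q. 0::real) has_derivative (\<lambda>v. 0)) (at p)" by simp
  then have "(f has_derivative (\<lambda>v. 0)) (at p)"
    by (rule has_derivative_transform_within_open[OF _ assms(1) assms(3)]) (simp add: assms(2))
  then have "(\<lambda>v. 0) = frechet_derivative f (at p)" by (rule frechet_derivative_at)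
  then show ?thesis unfolding pd_def by (metis)
qed

lemma identA:
  fixes s y1 y2 T gt btt bt1 bt2 b11 b12 b22 :: real
  assumes T: "T^2 = s^2 + y1^2 + y2^2" "T > 0"
  shows "s * (btt - b11 - b22) =
     s * ((1/T - s^2/T^3)*gt + (s/T)^2*btt) + 2 * ((s/T)*gt)
   + 2 * (y1 * (-(s*y1/T^3)*gt + (s/T)*((y1/T)*btt + bt1)) + y2 * (-(s*y2/T^3)*gt + (s/T)*((y2/T)*btt + bt2)))
   - s * (((1/T - y1^2/T^3)*gt + (y1/T)*((y1/T)*btt + bt1) + (y1/T)*bt1 + b11)
        + ((1/T - y2^2/T^3)*gt + (y2/T)*((y2/T)*btt + bt2) + (y2/T)*bt2 + b22))"
proof -
  have "T \<noteq> 0" using T by simp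
  let ?R = "s * ((1/T - s^2/T^3)*gt + (s/T)^2*btt) + 2 * ((s/T)*gt)
   + 2 * (y1 * (-(s*y1/T^3)*gt + (s/T)*((y1/T)*btt + bt1)) + y2 * (-(s*y2/T^3)*gt + (s/T)*((y2/T)*btt + bt2)))
   - s * (((1/T - y1^2/T^3)*gt + (y1/T)*((y1/T)*btt + bt1) + (y1/T)*bt1 + b11)
        + ((1/T - y2^2/T^3)*gt + (y2/T)*((y2/T)*btt + bt2) + (y2/T)*bt2 + b22))"
  define q where "q = 1/T"
  have q: "x / T = x * q" "x / T^2 = x * q^2" "x / T^3 = x * q^3" for x
    by (simp_all add: q_def field_simps)
  have "?R = s*btt*((s^2+y1^2+y2^2)*q^2) + s*gt*(q - (s^2+y1^2+y2^2)*q^3) - s*b11 - s*b22"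
    unfolding q by (simp add: algebra_simps power2_eq_square power3_eq_cube)
  also have TT: "s^2+y1^2+y2^2 = T^2" using T by simp
  also have "T^2*q^2 = 1" using \<open>T \<noteq> 0\<close> by (simp add: q_def field_simps)
  also have "T^2*q^3 = q" using \<open>T \<noteq> 0\<close> by (simp add: q_def field_simps power3_eq_cube power2_eq_square)
  finally show ?thesis using TT by (simp add: algebra_simps)
qed

lemma identP:
  fixes s y1 y2 v0 vs v1 v2 vss vs1 vs2 v11 v12 v22 :: real
  defines "W \<equiv> s * vs + 2 * (y1 * v1 + y2 * v2) + v0"
  shows "2 * W * (vs + s * vss + 2 * (y1 * vs1 + y2 * vs2) + vs)
       + 2 * (s * v1) * (v1 + s * vs1) + 2 * (s * v2) * (v2 + s * vs2)
     = 2 * W * (s * vss + 2 * vs + 2 * (y1 * vs1 + y2 * vs2) - s * (v11 + v22))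
     + 2 * s * ((s * vs1 + 2 * (v1 + y1 * v11 + y2 * v12) + v1) * v1 + W * v11
            - (v1^2 + v2^2) - y1 * (2 * v1 * v11 + 2 * v2 * v12))
     + 2 * s * ((s * vs2 + 2 * (y1 * v12 + v2 + y2 * v22) + v2) * v2 + W * v22
            - (v1^2 + v2^2) - y2 * (2 * v1 * v12 + 2 * v2 * v22))"
  unfolding W_def by (simp add: algebra_simps power2_eq_square)

lemma Tf_deriv_s: "s \<noteq> 0 \<Longrightarrow> ((\<lambda>\<sigma>. Tf \<sigma> y) has_real_derivative s / Tf s y) (at s within X)"
proof -
  assume s: "s \<noteq> 0"
  have p: "((fst y)^2 + (snd y)^2) + s^2 > 0" using s by (simp add: add_nonneg_pos)
  have e: "(\<lambda>\<sigma>. Tf \<sigma> y) = (\<lambda>\<sigma>. sqrt (((fst y)^2 + (snd y)^2) + \<sigma>^2))"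
    by (rule ext) (simp add: Tf_def add_ac)
  have "Tf s y = sqrt (((fst y)^2 + (snd y)^2) + s^2)" by (simp add: Tf_def add_ac)
  then show ?thesis unfolding e using sqrt_deriv[OF p, of X] by simp
qed

lemma Tf_deriv_1: "s \<noteq> 0 \<Longrightarrow> ((\<lambda>a. Tf s (a, b)) has_real_derivative a / Tf s (a, b)) (at a within X)"
proof -
  assume s: "s \<noteq> 0"
  have p: "(s^2 + b^2) + a^2 > 0" using s by (simp add: add_pos_nonneg)
  have e: "(\<lambda>a. Tf s (a, b)) = (\<lambda>a. sqrt ((s^2 + b^2) + a^2))"
    by (rule ext) (simp add: Tf_def add_ac)
  have "Tf s (a, b) = sqrt ((s^2 + b^2) + a^2)" by (simp add: Tf_def add_ac)
  then show ?thesis unfolding e using sqrt_deriv[OF p, of X] by simp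
qed

lemma Tf_deriv_2: "s \<noteq> 0 \<Longrightarrow> ((\<lambda>b. Tf s (a, b)) has_real_derivative b / Tf s (a, b)) (at b within X)"
proof -
  assume s: "s \<noteq> 0"
  have p: "(s^2 + a^2) + b^2 > 0" using s by (simp add: add_pos_nonneg)
  have e: "(\<lambda>b. Tf s (a, b)) = (\<lambda>b. sqrt ((s^2 + a^2) + b^2))"
    by (rule ext) (simp add: Tf_def add_ac)
  have "Tf s (a, b) = sqrt ((s^2 + a^2) + b^2)" by (simp add: Tf_def add_ac)
  then show ?thesis unfolding e using sqrt_deriv[OF p, of X] by simp
qed

lemma cont_hyp: "continuous_on X (\<lambda>z::real \<times> (real \<times> real). hyp (fst z) (snd z))"
  unfolding hyp_def by (intro continuous_intros)

lemma cont_Tf: "continuous_on X (\<lambda>z::real \<times> (real \<times> real). Tf (fst z) (snd z))"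
  unfolding Tf_def by (intro continuous_intros)


locale cset =
  fixes s0 s1 :: real and u :: "pt \<Rightarrow> real" and U :: "pt set" and dl :: real
  assumes s0: "1 < s0" and s01: "s0 < s1" and sl: "slab s0 s1 \<subseteq> U" and C2: "C2_on U u"
    and dl: "dl > 0" and van: "\<forall>p\<in>slab s0 s1. tco p \<le> rad p + 1 + dl \<longrightarrow> u p = 0"
begin

lemma openU: "open U" using C2 by (simp add: C2_on_def)
lemma du: "q \<in> U \<Longrightarrow> u differentiable (at q)" using C2 by (simp add: C2_on_def)
lemma dpu: "q \<in> U \<Longrightarrow> (\<lambda>q. pd u v q) differentiable (at q)" using C2 unfolding C2_on_def by blast
lemma cpp: "continuous_on U (\<lambda>q. pd (\<lambda>q'. pd u v q') w q)" using C2 unfolding C2_on_def by blast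

lemma cu: "continuous_on U u"
  by (intro continuous_at_imp_continuous_on ballI differentiable_imp_continuous_within du)
lemma cpu: "continuous_on U (\<lambda>q. pd u v q)"
  by (intro continuous_at_imp_continuous_on ballI differentiable_imp_continuous_within dpu)

lemma sym: "q \<in> U \<Longrightarrow> pd (\<lambda>q. pd u v q) w q = pd (\<lambda>q. pd u w q) v q"
  by (rule schwarz[OF openU _ du dpu dpu cpp cpp])

definition "SS = {s0..s1}"
lemma s0pos: "s0 > 0" using s0 by simp
lemma SS_pos: "s \<in> SS \<Longrightarrow> s > 0" using s0 by (simp add: SS_def)
lemma hypU: "s \<in> SS \<Longrightarrow> hyp s y \<in> U" using hyp_slab[OF s0pos, of s s1 y] sl by (auto simp: SS_def)

definition "Ob = {p. 0 < tco p \<and> s0^2 < (tco p)^2 - (rad p)^2 \<and> (tco p)^2 - (rad p)^2 < s1^2 \<and> tco p < rad p + 1 + dl}"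

lemma open_Ob: "open Ob"
proof -
  have c1: "continuous_on UNIV tco" unfolding tco_def by (intro continuous_intros)
  have c2: "continuous_on UNIV rad" unfolding rad_def x1co_def x2co_def by (intro continuous_intros)
  have eq: "Ob = {p. 0 < tco p} \<inter> {p. s0^2 < (tco p)^2 - (rad p)^2} \<inter> {p. (tco p)^2 - (rad p)^2 < s1^2} \<inter> {p. tco p < rad p + 1 + dl}"
    by (auto simp: Ob_def)
  show ?thesis unfolding eq
    by (intro open_Int open_Collect_less continuous_intros c1 c2)
qed

lemma Ob_slab: "Ob \<subseteq> slab s0 s1" by (auto simp: Ob_def slab_def)

lemma u_Ob: "q \<in> Ob \<Longrightarrow> u q = 0"
  using van Ob_slab by (auto simp: Ob_def)
lemma pu_Ob: "q \<in> Ob \<Longrightarrow> pd u v q = 0"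
  by (rule pd_zero_open[OF open_Ob u_Ob])
lemma ppu_Ob: "q \<in> Ob \<Longrightarrow> pd (\<lambda>q. pd u v q) w q = 0"
  by (rule pd_zero_open[OF open_Ob pu_Ob])

definition "R = s1^2 + 1"

lemma hyp_Ob:
  assumes "s0 < s" "s < s1" "R \<le> sqrt ((fst y)^2 + (snd y)^2)"
  shows "hyp s y \<in> Ob"
proof -
  let ?r = "sqrt ((fst y)^2 + (snd y)^2)"
  have spos: "s > 0" using assms s0 by simp
  have T: "Tf s y > 0" using Tf_pos[of s y] spos by simp
  have r2: "?r^2 = (fst y)^2 + (snd y)^2" by simp
  have d: "(Tf s y)^2 - ?r^2 = s^2" using Tf_sq[of s y] r2 by simp
  have a: "s0^2 < s^2" using assms s0 by (intro power_strict_mono) auto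
  have b: "s^2 < s1^2" using assms s0 by (intro power_strict_mono) auto
  have r: "s1^2 < ?r" using assms(3) by (simp add: R_def)
  have "(Tf s y)^2 < (?r + 1)^2"
  proof -
    have "(Tf s y)^2 = s^2 + ?r^2" using d by simp
    also have "\<dots> < ?r + ?r^2" using b r by simp
    also have "\<dots> \<le> (?r + 1)^2" by (simp add: power2_eq_square algebra_simps)
    finally show ?thesis .
  qed
  then have "Tf s y < ?r + 1" by (rule power_less_imp_less_base) simp
  then show ?thesis
    unfolding Ob_def using T d a b dl by (simp add: hyp_co rad_hyp)
qed

lemma vanish_gen:
  fixes f :: "pt \<Rightarrow> real"
  assumes cf: "continuous_on U f" and fz: "\<And>q. q \<in> Ob \<Longrightarrow> f q = 0"
    and s: "s \<in> SS" and far: "R \<le> sqrt ((fst y)^2 + (snd y)^2)"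
  shows "f (hyp s y) = 0"
proof -
  have c: "continuous_on (closure {s0<..<s1}) (\<lambda>\<sigma>. f (hyp \<sigma> y))"
  proof -
    have "closure {s0<..<s1} = SS" using s01 by (simp add: SS_def)
    moreover have "continuous_on SS (\<lambda>\<sigma>. f (hyp \<sigma> y))"
    proof (rule continuous_on_compose2[OF cf])
      show "continuous_on SS (\<lambda>\<sigma>. hyp \<sigma> y)" unfolding hyp_def by (intro continuous_intros)
      show "(\<lambda>\<sigma>. hyp \<sigma> y) ` SS \<subseteq> U" by (simp add: image_subset_iff hypU)
    qed
    ultimately show ?thesis by simp
  qed
  have z: "\<And>x. x \<in> {s0<..<s1} \<Longrightarrow> f (hyp x y) = 0" using hyp_Ob far fz by auto
  have m: "s \<in> closure {s0<..<s1}" using s s01 by (simp add: SS_def)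
  show ?thesis
    using continuous_constant_on_closure[of "{s0<..<s1}" "\<lambda>\<sigma>. f (hyp \<sigma> y)" 0 s] c z m by blast
qed

lemma far_if: "R \<le> \<bar>fst y\<bar> \<or> R \<le> \<bar>snd y\<bar> \<Longrightarrow> R \<le> sqrt ((fst y)^2 + (snd y)^2)"
proof -
  assume "R \<le> \<bar>fst y\<bar> \<or> R \<le> \<bar>snd y\<bar>"
  moreover have "\<bar>fst y\<bar> \<le> sqrt ((fst y)^2 + (snd y)^2)"
  proof -
    have "sqrt ((fst y)^2) \<le> sqrt ((fst y)^2 + (snd y)^2)" by (rule real_sqrt_le_mono) simp
    then show ?thesis by simp
  qed
  moreover have "\<bar>snd y\<bar> \<le> sqrt ((fst y)^2 + (snd y)^2)"
  proof -
    have "sqrt ((snd y)^2) \<le> sqrt ((fst y)^2 + (snd y)^2)" by (rule real_sqrt_le_mono) simp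
    then show ?thesis by simp
  qed
  ultimately show ?thesis by linarith
qed

definition "P0 s y = u (hyp s y)"
definition "P1 v s y = pd u v (hyp s y)"
definition "P2 v w s y = pd (\<lambda>q. pd u v q) w (hyp s y)"

lemma vanish:
  assumes "s \<in> SS" "R \<le> \<bar>fst y\<bar> \<or> R \<le> \<bar>snd y\<bar>"
  shows "P0 s y = 0" "P1 v s y = 0" "P2 v w s y = 0"
  using vanish_gen[OF cu u_Ob assms(1) far_if[OF assms(2)]]
    vanish_gen[OF cpu pu_Ob assms(1) far_if[OF assms(2)]]
    vanish_gen[OF cpp ppu_Ob assms(1) far_if[OF assms(2)]]
  by (simp_all add: P0_def P1_def P2_def)

end


context cset begin

definition "vS s y = (s / Tf s y) * P1 e_t s y"
definition "V1 s y = (fst y / Tf s y) * P1 e_t s y + P1 e_1 s y"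
definition "V2 s y = (snd y / Tf s y) * P1 e_t s y + P1 e_2 s y"
definition "Wq s y = s * vS s y + 2 * (fst y * V1 s y + snd y * V2 s y) + P0 s y"
definition "ee s y = (Wq s y)^2 + (s * V1 s y)^2 + (s * V2 s y)^2"
definition "F1 s y = 2 * s * (Wq s y * V1 s y - fst y * ((V1 s y)^2 + (V2 s y)^2))"
definition "F2 s y = 2 * s * (Wq s y * V2 s y - snd y * ((V1 s y)^2 + (V2 s y)^2))"
definition "vss s y = (1/Tf s y - s^2/(Tf s y)^3) * P1 e_t s y + (s/Tf s y)^2 * P2 e_t e_t s y"
definition "vs1 s y = -(s*fst y/(Tf s y)^3) * P1 e_t s y + (s/Tf s y)*((fst y/Tf s y)*P2 e_t e_t s y + P2 e_t e_1 s y)"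
definition "vs2 s y = -(s* snd y/(Tf s y)^3) * P1 e_t s y + (s/Tf s y)*((snd y/Tf s y)*P2 e_t e_t s y + P2 e_t e_2 s y)"
definition "v11 s y = (1/Tf s y - (fst y)^2/(Tf s y)^3) * P1 e_t s y + (fst y/Tf s y)*((fst y/Tf s y)*P2 e_t e_t s y + P2 e_t e_1 s y) + (fst y/Tf s y)*P2 e_t e_1 s y + P2 e_1 e_1 s y"
definition "v22 s y = (1/Tf s y - (snd y)^2/(Tf s y)^3) * P1 e_t s y + (snd y/Tf s y)*((snd y/Tf s y)*P2 e_t e_t s y + P2 e_t e_2 s y) + (snd y/Tf s y)*P2 e_t e_2 s y + P2 e_2 e_2 s y"
definition "v12 s y = -(fst y* snd y/(Tf s y)^3) * P1 e_t s y + (fst y/Tf s y)*((snd y/Tf s y)*P2 e_t e_t s y + P2 e_t e_2 s y) + (snd y/Tf s y)*P2 e_t e_1 s y + P2 e_1 e_2 s y"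
definition "wv s y = P2 e_t e_t s y - P2 e_1 e_1 s y - P2 e_2 e_2 s y"

lemma P2sym: "s \<in> SS \<Longrightarrow> P2 v w s y = P2 w v s y"
  unfolding P2_def by (rule sym[OF hypU])

lemma dP0_s: "s \<in> SS \<Longrightarrow> ((\<lambda>\<sigma>. P0 \<sigma> y) has_real_derivative vS s y) (at s within X)"
  unfolding P0_def vS_def P1_def using chain_s[OF SS_pos du[OF hypU]] by simp
lemma dP1_s: "s \<in> SS \<Longrightarrow> ((\<lambda>\<sigma>. P1 v \<sigma> y) has_real_derivative (s / Tf s y) * P2 v e_t s y) (at s within X)"
  unfolding P1_def P2_def using chain_s[OF SS_pos dpu[OF hypU]] by simp
lemma dP0_1: "s \<in> SS \<Longrightarrow> ((\<lambda>a. P0 s (a, b)) has_real_derivative V1 s (a, b)) (at a within X)"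
  unfolding P0_def V1_def P1_def using chain_1[OF SS_pos du[OF hypU]] by simp
lemma dP1_1: "s \<in> SS \<Longrightarrow> ((\<lambda>a. P1 v s (a, b)) has_real_derivative (a / Tf s (a, b)) * P2 v e_t s (a, b) + P2 v e_1 s (a, b)) (at a within X)"
  unfolding P1_def P2_def using chain_1[OF SS_pos dpu[OF hypU]] by simp
lemma dP0_2: "s \<in> SS \<Longrightarrow> ((\<lambda>b. P0 s (a, b)) has_real_derivative V2 s (a, b)) (at b within X)"
  unfolding P0_def V2_def P1_def using chain_2[OF SS_pos du[OF hypU]] by simp
lemma dP1_2: "s \<in> SS \<Longrightarrow> ((\<lambda>b. P1 v s (a, b)) has_real_derivative (b / Tf s (a, b)) * P2 v e_t s (a, b) + P2 v e_2 s (a, b)) (at b within X)"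
  unfolding P1_def P2_def using chain_2[OF SS_pos dpu[OF hypU]] by simp

lemma dvS_s:
  assumes s: "s \<in> SS"
  shows "((\<lambda>\<sigma>. vS \<sigma> y) has_real_derivative vss s y) (at s within X)"
proof -
  have T: "Tf s y \<noteq> 0" using Tf_pos[of s y] SS_pos[OF s] by simp
  have sp: "s \<noteq> 0" using SS_pos[OF s] by simp
  have "((\<lambda>\<sigma>. vS \<sigma> y) has_real_derivative
     ((1 * Tf s y - s * (s / Tf s y)) / (Tf s y * Tf s y)) * P1 e_t s y + ((s / Tf s y) * P2 e_t e_t s y) * (s / Tf s y)) (at s within X)"
    unfolding vS_def by (intro DERIV_mult DERIV_divide DERIV_ident Tf_deriv_s[OF sp] dP1_s[OF s] T)
  then show ?thesis
    by (rule DERIV_cong) (use T in \<open>simp add: vss_def field_simps power2_eq_square power3_eq_cube\<close>)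
qed


lemma Tnz: "s \<in> SS \<Longrightarrow> Tf s y \<noteq> 0" using Tf_pos[of s y] SS_pos by force

lemma dV1_s:
  assumes s: "s \<in> SS"
  shows "((\<lambda>\<sigma>. V1 \<sigma> y) has_real_derivative vs1 s y) (at s within X)"
proof -
  have T: "Tf s y \<noteq> 0" by (rule Tnz[OF s])
  have sp: "s \<noteq> 0" using SS_pos[OF s] by simp
  have "((\<lambda>\<sigma>. V1 \<sigma> y) has_real_derivative
     ((0 * Tf s y - fst y * (s / Tf s y)) / (Tf s y * Tf s y)) * P1 e_t s y + ((s / Tf s y) * P2 e_t e_t s y) * (fst y / Tf s y) + (s / Tf s y) * P2 e_1 e_t s y) (at s within X)"
    unfolding V1_def by (intro DERIV_add DERIV_mult DERIV_divide DERIV_const Tf_deriv_s[OF sp] dP1_s[OF s] T)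
  then show ?thesis
    by (rule DERIV_cong) (use T in \<open>simp add: vs1_def P2sym[OF s, of e_1 e_t] field_simps power2_eq_square power3_eq_cube\<close>)
qed

lemma dV2_s:
  assumes s: "s \<in> SS"
  shows "((\<lambda>\<sigma>. V2 \<sigma> y) has_real_derivative vs2 s y) (at s within X)"
proof -
  have T: "Tf s y \<noteq> 0" by (rule Tnz[OF s])
  have sp: "s \<noteq> 0" using SS_pos[OF s] by simp
  have "((\<lambda>\<sigma>. V2 \<sigma> y) has_real_derivative
     ((0 * Tf s y - snd y * (s / Tf s y)) / (Tf s y * Tf s y)) * P1 e_t s y + ((s / Tf s y) * P2 e_t e_t s y) * (snd y / Tf s y) + (s / Tf s y) * P2 e_2 e_t s y) (at s within X)"
    unfolding V2_def by (intro DERIV_add DERIV_mult DERIV_divide DERIV_const Tf_deriv_s[OF sp] dP1_s[OF s] T)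
  then show ?thesis
    by (rule DERIV_cong) (use T in \<open>simp add: vs2_def P2sym[OF s, of e_2 e_t] field_simps power2_eq_square power3_eq_cube\<close>)
qed

lemma dvS_1:
  assumes s: "s \<in> SS"
  shows "((\<lambda>a. vS s (a, b)) has_real_derivative vs1 s (a, b)) (at a within X)"
proof -
  have T: "Tf s (a, b) \<noteq> 0" by (rule Tnz[OF s])
  have sp: "s \<noteq> 0" using SS_pos[OF s] by simp
  have "((\<lambda>a. vS s (a, b)) has_real_derivative
     ((0 * Tf s (a, b) - s * (a / Tf s (a, b))) / (Tf s (a, b) * Tf s (a, b))) * P1 e_t s (a, b)
       + ((a / Tf s (a, b)) * P2 e_t e_t s (a, b) + P2 e_t e_1 s (a, b)) * (s / Tf s (a, b))) (at a within X)"
    unfolding vS_def by (intro DERIV_add DERIV_mult DERIV_divide DERIV_const Tf_deriv_1[OF sp] dP1_1[OF s] T)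
  then show ?thesis
    by (rule DERIV_cong) (use T in \<open>simp add: vs1_def field_simps power2_eq_square power3_eq_cube\<close>)
qed

lemma dvS_2:
  assumes s: "s \<in> SS"
  shows "((\<lambda>b. vS s (a, b)) has_real_derivative vs2 s (a, b)) (at b within X)"
proof -
  have T: "Tf s (a, b) \<noteq> 0" by (rule Tnz[OF s])
  have sp: "s \<noteq> 0" using SS_pos[OF s] by simp
  have "((\<lambda>b. vS s (a, b)) has_real_derivative
     ((0 * Tf s (a, b) - s * (b / Tf s (a, b))) / (Tf s (a, b) * Tf s (a, b))) * P1 e_t s (a, b)
       + ((b / Tf s (a, b)) * P2 e_t e_t s (a, b) + P2 e_t e_2 s (a, b)) * (s / Tf s (a, b))) (at b within X)"
    unfolding vS_def by (intro DERIV_add DERIV_mult DERIV_divide DERIV_const Tf_deriv_2[OF sp] dP1_2[OF s] T)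
  then show ?thesis
    by (rule DERIV_cong) (use T in \<open>simp add: vs2_def field_simps power2_eq_square power3_eq_cube\<close>)
qed

lemma dV1_1:
  assumes s: "s \<in> SS"
  shows "((\<lambda>a. V1 s (a, b)) has_real_derivative v11 s (a, b)) (at a within X)"
proof -
  have T: "Tf s (a, b) \<noteq> 0" by (rule Tnz[OF s])
  have sp: "s \<noteq> 0" using SS_pos[OF s] by simp
  have "((\<lambda>a. V1 s (a, b)) has_real_derivative
     ((1 * Tf s (a, b) - a * (a / Tf s (a, b))) / (Tf s (a, b) * Tf s (a, b))) * P1 e_t s (a, b)
       + ((a / Tf s (a, b)) * P2 e_t e_t s (a, b) + P2 e_t e_1 s (a, b)) * (a / Tf s (a, b))
       + ((a / Tf s (a, b)) * P2 e_1 e_t s (a, b) + P2 e_1 e_1 s (a, b))) (at a within X)"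
    unfolding V1_def fst_conv by (intro DERIV_add DERIV_mult DERIV_divide DERIV_ident Tf_deriv_1[OF sp] dP1_1[OF s] T)
  then show ?thesis
    by (rule DERIV_cong) (use T in \<open>simp add: v11_def P2sym[OF s, of e_1 e_t] field_simps power2_eq_square power3_eq_cube\<close>)
qed

lemma dV2_1:
  assumes s: "s \<in> SS"
  shows "((\<lambda>a. V2 s (a, b)) has_real_derivative v12 s (a, b)) (at a within X)"
proof -
  have T: "Tf s (a, b) \<noteq> 0" by (rule Tnz[OF s])
  have sp: "s \<noteq> 0" using SS_pos[OF s] by simp
  have "((\<lambda>a. V2 s (a, b)) has_real_derivative
     ((0 * Tf s (a, b) - b * (a / Tf s (a, b))) / (Tf s (a, b) * Tf s (a, b))) * P1 e_t s (a, b)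
       + ((a / Tf s (a, b)) * P2 e_t e_t s (a, b) + P2 e_t e_1 s (a, b)) * (b / Tf s (a, b))
       + ((a / Tf s (a, b)) * P2 e_2 e_t s (a, b) + P2 e_2 e_1 s (a, b))) (at a within X)"
    unfolding V2_def snd_conv by (intro DERIV_add DERIV_mult DERIV_divide DERIV_const Tf_deriv_1[OF sp] dP1_1[OF s] T)
  then show ?thesis
    by (rule DERIV_cong) (use T in \<open>simp add: v12_def P2sym[OF s, of e_2 e_t] P2sym[OF s, of e_2 e_1] field_simps power2_eq_square power3_eq_cube\<close>)
qed

lemma dV1_2:
  assumes s: "s \<in> SS"
  shows "((\<lambda>b. V1 s (a, b)) has_real_derivative v12 s (a, b)) (at b within X)"
proof -
  have T: "Tf s (a, b) \<noteq> 0" by (rule Tnz[OF s])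
  have sp: "s \<noteq> 0" using SS_pos[OF s] by simp
  have "((\<lambda>b. V1 s (a, b)) has_real_derivative
     ((0 * Tf s (a, b) - a * (b / Tf s (a, b))) / (Tf s (a, b) * Tf s (a, b))) * P1 e_t s (a, b)
       + ((b / Tf s (a, b)) * P2 e_t e_t s (a, b) + P2 e_t e_2 s (a, b)) * (a / Tf s (a, b))
       + ((b / Tf s (a, b)) * P2 e_1 e_t s (a, b) + P2 e_1 e_2 s (a, b))) (at b within X)"
    unfolding V1_def fst_conv by (intro DERIV_add DERIV_mult DERIV_divide DERIV_const Tf_deriv_2[OF sp] dP1_2[OF s] T)
  then show ?thesis
    by (rule DERIV_cong) (use T in \<open>simp add: v12_def P2sym[OF s, of e_1 e_t] field_simps power2_eq_square power3_eq_cube\<close>)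
qed

lemma dV2_2:
  assumes s: "s \<in> SS"
  shows "((\<lambda>b. V2 s (a, b)) has_real_derivative v22 s (a, b)) (at b within X)"
proof -
  have T: "Tf s (a, b) \<noteq> 0" by (rule Tnz[OF s])
  have sp: "s \<noteq> 0" using SS_pos[OF s] by simp
  have "((\<lambda>b. V2 s (a, b)) has_real_derivative
     ((1 * Tf s (a, b) - b * (b / Tf s (a, b))) / (Tf s (a, b) * Tf s (a, b))) * P1 e_t s (a, b)
       + ((b / Tf s (a, b)) * P2 e_t e_t s (a, b) + P2 e_t e_2 s (a, b)) * (b / Tf s (a, b))
       + ((b / Tf s (a, b)) * P2 e_2 e_t s (a, b) + P2 e_2 e_2 s (a, b))) (at b within X)"
    unfolding V2_def snd_conv by (intro DERIV_add DERIV_mult DERIV_divide DERIV_ident Tf_deriv_2[OF sp] dP1_2[OF s] T)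
  then show ?thesis
    by (rule DERIV_cong) (use T in \<open>simp add: v22_def P2sym[OF s, of e_2 e_t] field_simps power2_eq_square power3_eq_cube\<close>)
qed


definition "dWs s y = vS s y + s * vss s y + 2 * (fst y * vs1 s y + snd y * vs2 s y) + vS s y"
definition "dE s y = 2 * Wq s y * dWs s y + 2 * (s * V1 s y) * (V1 s y + s * vs1 s y) + 2 * (s * V2 s y) * (V2 s y + s * vs2 s y)"
definition "dW1 s y = s * vs1 s y + 2 * (V1 s y + fst y * v11 s y + snd y * v12 s y) + V1 s y"
definition "dW2 s y = s * vs2 s y + 2 * (fst y * v12 s y + V2 s y + snd y * v22 s y) + V2 s y"
definition "D1F s y = 2 * s * (dW1 s y * V1 s y + Wq s y * v11 s y - ((V1 s y)^2 + (V2 s y)^2) - fst y * (2 * V1 s y * v11 s y + 2 * V2 s y * v12 s y))"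
definition "D2F s y = 2 * s * (dW2 s y * V2 s y + Wq s y * v22 s y - ((V1 s y)^2 + (V2 s y)^2) - snd y * (2 * V1 s y * v12 s y + 2 * V2 s y * v22 s y))"

lemma dWq_s:
  assumes s: "s \<in> SS"
  shows "((\<lambda>\<sigma>. Wq \<sigma> y) has_real_derivative dWs s y) (at s within X)"
  unfolding Wq_def
  apply (rule derivative_eq_intros refl dvS_s[OF s] dV1_s[OF s] dV2_s[OF s] dP0_s[OF s])+
  apply (simp add: dWs_def algebra_simps)
  done

lemma dee_s:
  assumes s: "s \<in> SS"
  shows "((\<lambda>\<sigma>. ee \<sigma> y) has_real_derivative dE s y) (at s within X)"
  unfolding ee_def
  apply (rule derivative_eq_intros refl dWq_s[OF s] dV1_s[OF s] dV2_s[OF s])+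
  apply (simp add: dE_def algebra_simps power2_eq_square)
  done

lemma dWq_1:
  assumes s: "s \<in> SS"
  shows "((\<lambda>a. Wq s (a, b)) has_real_derivative dW1 s (a, b)) (at a within X)"
  unfolding Wq_def fst_conv snd_conv
  apply (rule derivative_eq_intros refl dvS_1[OF s] dV1_1[OF s] dV2_1[OF s] dP0_1[OF s])+
  apply (simp add: dW1_def algebra_simps)
  done

lemma dWq_2:
  assumes s: "s \<in> SS"
  shows "((\<lambda>b. Wq s (a, b)) has_real_derivative dW2 s (a, b)) (at b within X)"
  unfolding Wq_def fst_conv snd_conv
  apply (rule derivative_eq_intros refl dvS_2[OF s] dV1_2[OF s] dV2_2[OF s] dP0_2[OF s])+
  apply (simp add: dW2_def algebra_simps)
  done

lemma dF1_1:
  assumes s: "s \<in> SS"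
  shows "((\<lambda>a. F1 s (a, b)) has_real_derivative D1F s (a, b)) (at a within X)"
  unfolding F1_def fst_conv
  apply (rule derivative_eq_intros refl dWq_1[OF s] dV1_1[OF s] dV2_1[OF s])+
  apply (simp add: D1F_def algebra_simps power2_eq_square)
  done

lemma dF2_2:
  assumes s: "s \<in> SS"
  shows "((\<lambda>b. F2 s (a, b)) has_real_derivative D2F s (a, b)) (at b within X)"
  unfolding F2_def snd_conv
  apply (rule derivative_eq_intros refl dWq_2[OF s] dV1_2[OF s] dV2_2[OF s])+
  apply (simp add: D2F_def algebra_simps power2_eq_square)
  done

lemma pointwise:
  assumes s: "s \<in> SS"
  shows "dE s y = 2 * s * Wq s y * wv s y + D1F s y + D2F s y"
proof -
  have T: "(Tf s y)^2 = s^2 + (fst y)^2 + (snd y)^2" "Tf s y > 0"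
    using Tf_sq[of s y] Tf_pos[of s y] SS_pos[OF s] by auto
  have A: "s * wv s y = s * vss s y + 2 * vS s y + 2 * (fst y * vs1 s y + snd y * vs2 s y) - s * (v11 s y + v22 s y)"
    unfolding wv_def vss_def vS_def vs1_def vs2_def v11_def v22_def
    by (rule identA[OF T])
  have P: "dE s y = 2 * Wq s y * (s * vss s y + 2 * vS s y + 2 * (fst y * vs1 s y + snd y * vs2 s y) - s * (v11 s y + v22 s y)) + D1F s y + D2F s y"
    unfolding dE_def dWs_def D1F_def D2F_def dW1_def dW2_def Wq_def
    by (rule identP)
  show ?thesis unfolding P A[symmetric] by (simp add: algebra_simps)
qed

end


context cset begin

definition "SU = SS \<times> (UNIV :: (real \<times> real) set)"
definition "B = cbox (-R, -R) (R, R)"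

lemma SU_fst: "z \<in> SU \<Longrightarrow> fst z \<in> SS" by (auto simp: SU_def)

lemma cP0: "continuous_on SU (\<lambda>z. P0 (fst z) (snd z))"
  unfolding P0_def
  by (rule continuous_on_compose2[OF cu cont_hyp]) (auto simp: SU_def intro: hypU)
lemma cP1: "continuous_on SU (\<lambda>z. P1 v (fst z) (snd z))"
  unfolding P1_def
  by (rule continuous_on_compose2[OF cpu cont_hyp]) (auto simp: SU_def intro: hypU)
lemma cP2: "continuous_on SU (\<lambda>z. P2 v w (fst z) (snd z))"
  unfolding P2_def
  by (rule continuous_on_compose2[OF cpp cont_hyp]) (auto simp: SU_def intro: hypU)

lemma TnzSU: "z \<in> SU \<Longrightarrow> Tf (fst z) (snd z) \<noteq> 0" using Tnz SU_fst by blast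

lemmas catoms = cP0 cP1 cP2 cont_Tf

lemma cvS: "continuous_on SU (\<lambda>z. vS (fst z) (snd z))"
  unfolding vS_def by (intro continuous_intros catoms) (simp add: TnzSU)
lemma cV1: "continuous_on SU (\<lambda>z. V1 (fst z) (snd z))"
  unfolding V1_def by (intro continuous_intros catoms) (simp add: TnzSU)
lemma cV2: "continuous_on SU (\<lambda>z. V2 (fst z) (snd z))"
  unfolding V2_def by (intro continuous_intros catoms) (simp add: TnzSU)
lemma cWq: "continuous_on SU (\<lambda>z. Wq (fst z) (snd z))"
  unfolding Wq_def by (intro continuous_intros catoms cvS cV1 cV2)
lemma cee: "continuous_on SU (\<lambda>z. ee (fst z) (snd z))"
  unfolding ee_def by (intro continuous_intros cWq cV1 cV2)
lemma cwv: "continuous_on SU (\<lambda>z. wv (fst z) (snd z))"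
  unfolding wv_def by (intro continuous_intros catoms)
lemma cvss: "continuous_on SU (\<lambda>z. vss (fst z) (snd z))"
  unfolding vss_def by (intro continuous_intros catoms) (simp_all add: TnzSU)
lemma cvs1: "continuous_on SU (\<lambda>z. vs1 (fst z) (snd z))"
  unfolding vs1_def by (intro continuous_intros catoms) (simp_all add: TnzSU)
lemma cvs2: "continuous_on SU (\<lambda>z. vs2 (fst z) (snd z))"
  unfolding vs2_def by (intro continuous_intros catoms) (simp_all add: TnzSU)
lemma cv11: "continuous_on SU (\<lambda>z. v11 (fst z) (snd z))"
  unfolding v11_def by (intro continuous_intros catoms) (simp_all add: TnzSU)
lemma cv12: "continuous_on SU (\<lambda>z. v12 (fst z) (snd z))"
  unfolding v12_def by (intro continuous_intros catoms) (simp_all add: TnzSU)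
lemma cv22: "continuous_on SU (\<lambda>z. v22 (fst z) (snd z))"
  unfolding v22_def by (intro continuous_intros catoms) (simp_all add: TnzSU)
lemma cdE: "continuous_on SU (\<lambda>z. dE (fst z) (snd z))"
  unfolding dE_def dWs_def by (intro continuous_intros cWq cV1 cV2 cvS cvss cvs1 cvs2)
lemma cD1F: "continuous_on SU (\<lambda>z. D1F (fst z) (snd z))"
  unfolding D1F_def dW1_def by (intro continuous_intros cWq cV1 cV2 cvs1 cv11 cv12)
lemma cD2F: "continuous_on SU (\<lambda>z. D2F (fst z) (snd z))"
  unfolding D2F_def dW2_def by (intro continuous_intros cWq cV1 cV2 cvs2 cv12 cv22)
lemma cWw: "continuous_on SU (\<lambda>z. 2 * fst z * Wq (fst z) (snd z) * wv (fst z) (snd z))"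
  by (intro continuous_intros cWq cwv)
lemma cw2: "continuous_on SU (\<lambda>z. (wv (fst z) (snd z))^2)"
  by (intro continuous_intros cwv)

lemma slice:
  assumes "continuous_on SU (\<lambda>z. f (fst z) (snd z))" "s \<in> SS"
  shows "continuous_on A (f s)"
proof -
  have "continuous_on A (\<lambda>y. (\<lambda>z. f (fst z) (snd z)) (s, y))"
    by (rule continuous_on_compose2[OF assms(1)]) (auto intro!: continuous_intros simp: SU_def assms(2))
  then show ?thesis by simp
qed

lemma prodc:
  assumes "continuous_on SU (\<lambda>z. f (fst z) (snd z))"
  shows "continuous_on (SS \<times> A) (\<lambda>(x, t). f x t)"
  using continuous_on_subset[OF assms, of "SS \<times> A"] by (auto simp: SU_def case_prod_unfold)

lemma notB: "y \<notin> B \<Longrightarrow> R \<le> \<bar>fst y\<bar> \<or> R \<le> \<bar>snd y\<bar>"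
  by (cases y) (auto simp: B_def cbox_Pair_eq)

lemma van2:
  assumes "s \<in> SS" "R \<le> \<bar>fst y\<bar> \<or> R \<le> \<bar>snd y\<bar>"
  shows "ee s y = 0" "wv s y = 0" "F1 s y = 0" "F2 s y = 0"
  using vanish[OF assms]
  by (simp_all add: ee_def wv_def F1_def F2_def Wq_def vS_def V1_def V2_def)

lemma restrict:
  assumes "\<And>y. y \<notin> B \<Longrightarrow> f y = 0"
  shows "integral UNIV f = integral B (f :: real \<times> real \<Rightarrow> real)"
proof -
  have "f = (\<lambda>y. if y \<in> B then f y else 0)" using assms by auto
  then have "integral UNIV f = integral UNIV (\<lambda>y. if y \<in> B then f y else 0)" by simp
  also have "\<dots> = integral B f" by (rule integral_restrict_UNIV)
  finally show ?thesis .
qed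

lemma E_eq:
  assumes s: "s \<in> SS"
  shows "E_con s u = integral B (ee s)"
proof -
  have sp: "s \<ge> 0" using SS_pos[OF s] by simp
  have "(\<lambda>y::real \<times> real. (Kop u (hyp s y) + u (hyp s y))^2 + (s * bar_1 u (hyp s y))^2 + (s * bar_2 u (hyp s y))^2) = ee s"
    by (rule ext) (simp add: Kop_def bar_s_def bar_1_def bar_2_def hs_hyp[OF sp] hyp_co
        ee_def Wq_def vS_def V1_def V2_def P0_def P1_def)
  then have "E_con s u = integral UNIV (ee s)" by (simp add: E_con_def)
  also have "\<dots> = integral B (ee s)" by (rule restrict) (use van2(1)[OF s notB] in auto)
  finally show ?thesis .
qed

lemma L2_eq:
  assumes s: "s \<in> SS"
  shows "L2_hyp s (wave u) = sqrt (integral B (\<lambda>y. (wv s y)^2))"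
proof -
  have "(\<lambda>y::real \<times> real. (wave u (hyp s y))^2) = (\<lambda>y. (wv s y)^2)"
    by (rule ext) (simp add: wave_def wv_def P2_def)
  then have "L2_hyp s (wave u) = sqrt (integral UNIV (\<lambda>y. (wv s y)^2))" by (simp add: L2_hyp_def)
  also have "integral UNIV (\<lambda>y. (wv s y)^2) = integral B (\<lambda>y. (wv s y)^2)"
    by (rule restrict) (use van2(2)[OF s notB] in auto)
  finally show ?thesis .
qed

end


context cset begin

lemma Rpos: "R > 0" using zero_le_power2[of s1] unfolding R_def by linarith

lemma intB:
  fixes f :: "real \<Rightarrow> real \<times> real \<Rightarrow> real"
  assumes "continuous_on SU (\<lambda>z. f (fst z) (snd z))" "s \<in> SS"
  shows "f s integrable_on B"
proof -
  have "continuous_on (cbox (-R, -R) (R, R)) (f s)" by (rule slice[OF assms])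
  then show ?thesis unfolding B_def by (rule integrable_continuous)
qed

lemma IBP2:
  assumes s: "s \<in> SS"
  shows "integral B (D2F s) = 0"
proof -
  have c: "continuous_on (cbox (-R, -R) (R, R)) (D2F s)" by (rule slice[OF cD2F s])
  have inner: "integral (cbox (-R) R) (\<lambda>b. D2F s (a, b)) = 0" for a
  proof -
    have "((\<lambda>b. D2F s (a, b)) has_integral F2 s (a, R) - F2 s (a, -R)) {-R..R}"
    proof (rule fundamental_theorem_of_calculus)
      show "- R \<le> R" using Rpos by simp
      show "((\<lambda>b. F2 s (a, b)) has_vector_derivative D2F s (a, b)) (at b within {- R..R})" if "b \<in> {-R..R}" for b
        unfolding has_real_derivative_iff_has_vector_derivative[symmetric] by (rule dF2_2[OF s])
    qed
    moreover have "F2 s (a, R) = 0" "F2 s (a, -R) = 0"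
      using van2(4)[OF s, of "(a, R)"] van2(4)[OF s, of "(a, -R)"] Rpos by auto
    ultimately show ?thesis by (simp add: integral_unique)
  qed
  have "integral B (D2F s) = integral (cbox (-R) R) (\<lambda>a. integral (cbox (-R) R) (\<lambda>b. D2F s (a, b)))"
    unfolding B_def by (rule integral_prod_continuous[OF c])
  also have "\<dots> = 0" using inner by simp
  finally show ?thesis .
qed

lemma IBP1:
  assumes s: "s \<in> SS"
  shows "integral B (D1F s) = 0"
proof -
  have c: "continuous_on (cbox (-R, -R) (R, R)) (D1F s)" by (rule slice[OF cD1F s])
  have c': "continuous_on (cbox (-R, -R) (R, R)) (\<lambda>(a, b). D1F s (a, b))" using c by (simp add: case_prod_unfold)
  have inner: "integral (cbox (-R) R) (\<lambda>a. D1F s (a, b)) = 0" for b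
  proof -
    have "((\<lambda>a. D1F s (a, b)) has_integral F1 s (R, b) - F1 s (-R, b)) {-R..R}"
    proof (rule fundamental_theorem_of_calculus)
      show "- R \<le> R" using Rpos by simp
      show "((\<lambda>a. F1 s (a, b)) has_vector_derivative D1F s (a, b)) (at a within {- R..R})" if "a \<in> {-R..R}" for a
        unfolding has_real_derivative_iff_has_vector_derivative[symmetric] by (rule dF1_1[OF s])
    qed
    moreover have "F1 s (R, b) = 0" "F1 s (-R, b) = 0"
      using van2(3)[OF s, of "(R, b)"] van2(3)[OF s, of "(-R, b)"] Rpos by auto
    ultimately show ?thesis by (simp add: integral_unique)
  qed
  have "integral B (D1F s) = integral (cbox (-R) R) (\<lambda>a. integral (cbox (-R) R) (\<lambda>b. D1F s (a, b)))"
    unfolding B_def by (rule integral_prod_continuous[OF c])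
  also have "\<dots> = integral (cbox (-R) R) (\<lambda>b. integral (cbox (-R) R) (\<lambda>a. D1F s (a, b)))"
    by (rule integral_swap_continuous[OF c'])
  also have "\<dots> = 0" using inner by simp
  finally show ?thesis .
qed

lemma E_deriv:
  assumes s: "s \<in> SS"
  shows "((\<lambda>\<sigma>. integral B (ee \<sigma>)) has_real_derivative integral B (\<lambda>y. 2 * s * Wq s y * wv s y)) (at s within SS)"
proof -
  have "((\<lambda>\<sigma>. integral (cbox (-R, -R) (R, R)) (ee \<sigma>)) has_real_derivative integral (cbox (-R, -R) (R, R)) (dE s)) (at s within SS)"
  proof (rule leibniz_rule_field_derivative)
    show "\<And>x t. x \<in> SS \<Longrightarrow> t \<in> cbox (- R, - R) (R, R) \<Longrightarrow> ((\<lambda>x. ee x t) has_real_derivative dE x t) (at x within SS)"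
      by (rule dee_s)
    show "\<And>x. x \<in> SS \<Longrightarrow> ee x integrable_on cbox (- R, - R) (R, R)"
      using intB[OF cee] by (simp add: B_def)
    show "continuous_on (SS \<times> cbox (- R, - R) (R, R)) (\<lambda>(x, t). dE x t)" by (rule prodc[OF cdE])
    show "s \<in> SS" by (rule s)
    show "convex SS" by (simp add: SS_def)
  qed
  moreover have "integral B (dE s) = integral B (\<lambda>y. 2 * s * Wq s y * wv s y)"
  proof -
    have i1: "(\<lambda>y. 2 * s * Wq s y * wv s y) integrable_on B" using intB[OF cWw s] by simp
    have i2: "D1F s integrable_on B" by (rule intB[OF cD1F s])
    have i3: "D2F s integrable_on B" by (rule intB[OF cD2F s])
    have "integral B (dE s) = integral B (\<lambda>y. 2 * s * Wq s y * wv s y + D1F s y + D2F s y)"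
    proof -
      have "dE s = (\<lambda>y. 2 * s * Wq s y * wv s y + D1F s y + D2F s y)" by (rule ext) (rule pointwise[OF s])
      then show ?thesis by simp
    qed
    also have "\<dots> = integral B (\<lambda>y. 2 * s * Wq s y * wv s y) + integral B (D1F s) + integral B (D2F s)"
      using i1 i2 i3 by (simp add: integral_add integrable_add)
    finally show ?thesis using IBP1[OF s] IBP2[OF s] by simp
  qed
  ultimately show ?thesis by (simp add: B_def)
qed

lemma pw_bound:
  fixes c W w e :: real
  assumes c: "c > 0" and e: "W^2 \<le> e"
  shows "2 * W * w \<le> c * e + (1 / c) * w^2"
proof -
  have "0 \<le> (c * W - w)^2 / c" using c by simp
  also have "(c * W - w)^2 / c = c * W^2 - 2 * W * w + (1 / c) * w^2"
    using c by (simp add: field_simps power2_eq_square)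
  finally have "2 * W * w \<le> c * W^2 + (1 / c) * w^2" by simp
  also have "\<dots> \<le> c * e + (1 / c) * w^2" using c e by simp
  finally show ?thesis .
qed

lemma bound:
  assumes s: "s \<in> SS"
  shows "integral B (\<lambda>y. 2 * s * Wq s y * wv s y) \<le> 2 * sqrt (integral B (ee s)) * (s * sqrt (integral B (\<lambda>y. (wv s y)^2)))"
proof -
  have sp: "s > 0" using SS_pos[OF s] .
  have iee: "ee s integrable_on B" by (rule intB[OF cee s])
  have iw2: "(\<lambda>y. (wv s y)^2) integrable_on B" using intB[OF cw2 s] by simp
  have iWw: "(\<lambda>y. 2 * Wq s y * wv s y) integrable_on B"
  proof -
    have "continuous_on SU (\<lambda>z. 2 * Wq (fst z) (snd z) * wv (fst z) (snd z))"
      by (intro continuous_intros cWq cwv)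
    from intB[OF this s] show ?thesis by simp
  qed
  let ?A = "integral B (ee s)" and ?C = "integral B (\<lambda>y. (wv s y)^2)"
  have A0: "?A \<ge> 0" by (rule integral_nonneg[OF iee]) (simp add: ee_def)
  have C0: "?C \<ge> 0" by (rule integral_nonneg[OF iw2]) simp
  have X: "integral B (\<lambda>y. 2 * Wq s y * wv s y) \<le> 2 * sqrt ?A * sqrt ?C"
  proof (rule amgm_bound[OF A0 C0])
    fix c :: real assume c: "c > 0"
    have "integral B (\<lambda>y. 2 * Wq s y * wv s y) \<le> integral B (\<lambda>y. c * ee s y + (1 / c) * (wv s y)^2)"
    proof (rule integral_le[OF iWw])
      have j1: "(\<lambda>x. c * ee s x) integrable_on B" using integrable_cmul[OF iee, of c] by simp
      have j2: "(\<lambda>x. 1 / c * (wv s x)^2) integrable_on B" using integrable_cmul[OF iw2, of "1 / c"] by simp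
      show "(\<lambda>y. c * ee s y + (1 / c) * (wv s y)^2) integrable_on B"
        using j1 j2 by (rule integrable_add)
      show "2 * Wq s y * wv s y \<le> c * ee s y + (1 / c) * (wv s y)^2" for y
        by (rule pw_bound[OF c]) (simp add: ee_def)
    qed
    also have "\<dots> = c * ?A + (1 / c) * ?C"
    proof -
      have j1: "(\<lambda>x. c * ee s x) integrable_on B" using integrable_cmul[OF iee, of c] by simp
      have j2: "(\<lambda>x. 1 / c * (wv s x)^2) integrable_on B" using integrable_cmul[OF iw2, of "1 / c"] by simp
      show ?thesis using j1 j2 by (simp add: integral_add)
    qed
    finally show "integral B (\<lambda>y. 2 * Wq s y * wv s y) \<le> c * ?A + ?C / c" by simp
  qed
  have "integral B (\<lambda>y. 2 * s * Wq s y * wv s y) = s * integral B (\<lambda>y. 2 * Wq s y * wv s y)"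
  proof -
    have "(\<lambda>y. 2 * s * Wq s y * wv s y) = (\<lambda>y. s * (2 * Wq s y * wv s y))" by (rule ext) (simp add: algebra_simps)
    then show ?thesis by simp
  qed
  also have "\<dots> \<le> s * (2 * sqrt ?A * sqrt ?C)" using X sp by simp
  finally show ?thesis by (simp add: algebra_simps)
qed

lemma cont_g: "continuous_on SS (\<lambda>s. s * sqrt (integral B (\<lambda>y. (wv s y)^2)))"
proof -
  have "continuous_on SS (\<lambda>s. integral (cbox (-R, -R) (R, R)) (\<lambda>y. (wv s y)^2))"
    by (rule integral_continuous_on_param) (rule prodc[OF cw2])
  then show ?thesis unfolding B_def by (intro continuous_intros)
qed

lemma main:
  "sqrt (E_con s1 u) \<le> sqrt (E_con s0 u) + integral {s0..s1} (\<lambda>s. s * L2_hyp s (wave u))"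
proof -
  have m0: "s0 \<in> SS" "s1 \<in> SS" using s01 by (auto simp: SS_def)
  have key: "sqrt (integral B (ee s1)) \<le> sqrt (integral B (ee s0)) + integral {s0..s1} (\<lambda>s. s * sqrt (integral B (\<lambda>y. (wv s y)^2)))"
  proof (rule ode_sqrt[where E' = "\<lambda>s. integral B (\<lambda>y. 2 * s * Wq s y * wv s y)"])
    show "s0 < s1" by (rule s01)
    show "((\<lambda>\<sigma>. integral B (ee \<sigma>)) has_real_derivative integral B (\<lambda>y. 2 * s * Wq s y * wv s y)) (at s within {s0..s1})"
      if "s \<in> {s0..s1}" for s using E_deriv[of s] that by (simp add: SS_def)
    show "integral B (\<lambda>y. 2 * s * Wq s y * wv s y) \<le> 2 * sqrt (integral B (ee s)) * (s * sqrt (integral B (\<lambda>y. (wv s y)^2)))"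
      if "s \<in> {s0..s1}" for s using bound[of s] that by (simp add: SS_def)
    show "0 \<le> integral B (ee s)" if "s \<in> {s0..s1}" for s
      using that by (intro integral_nonneg intB[OF cee]) (auto simp: SS_def ee_def)
    show "0 \<le> s * sqrt (integral B (\<lambda>y. (wv s y)^2))" if "s \<in> {s0..s1}" for s
    proof -
      have "s \<in> SS" using that by (simp add: SS_def)
      then have "0 \<le> integral B (\<lambda>y. (wv s y)^2)"
        using intB[OF cw2] by (intro integral_nonneg) auto
      then show ?thesis using that s0 by simp
    qed
    show "continuous_on {s0..s1} (\<lambda>s. s * sqrt (integral B (\<lambda>y. (wv s y)^2)))"
      using cont_g by (simp add: SS_def)
  qed
  have I: "integral {s0..s1} (\<lambda>s. s * L2_hyp s (wave u)) = integral {s0..s1} (\<lambda>s. s * sqrt (integral B (\<lambda>y. (wv s y)^2)))"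
    by (rule integral_cong) (simp add: L2_eq SS_def)
  show ?thesis using key unfolding I E_eq[OF m0(1)] E_eq[OF m0(2)] .
qed

end

theorem lemma2p1:
  fixes s0 s1 :: real and u :: "pt \<Rightarrow> real" and U :: "pt set"
  assumes "1 < s0" and "s0 < s1"
    and "slab s0 s1 \<subseteq> U" and "C2_on U u"
    and "\<exists>\<delta>>0. \<forall>p\<in>slab s0 s1. tco p \<le> rad p + 1 + \<delta> \<longrightarrow> u p = 0"
  shows "sqrt (E_con s1 u) \<le> sqrt (E_con s0 u) + integral {s0..s1} (\<lambda>s. s * L2_hyp s (wave u))"
proof -
  obtain d where d: "d > 0" "\<forall>p\<in>slab s0 s1. tco p \<le> rad p + 1 + d \<longrightarrow> u p = 0"
    using assms(5) by blast
  interpret cset s0 s1 u U d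
    by unfold_locales (use assms d in auto)
  show ?thesis by (rule main)
qed


end
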